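(* Let $A$ be a rational matrix with $m$ rows and $n$ columns, and let $b$ and $c$ be rational vectors. Consider the following procedure $\mathrm{maximize}(A,b,c)$. If $b$ has length $m$ and $c$ has length $n$, it forms the following finite list of non-strict linear constraints over rational variables $z_0,\dots,z_{n+m-1}$, where one writes $x=(z_0,\dots,z_{n-1})$ and $y=(z_n,\dots,z_{n+m-1})$: (i) $c\cdot x \ge b\cdot y$; (ii) $(Ax)_i \le b_i$ for each $i<m$; (iii) $(A^{T}y)_j = c_j$ for each $j<n$; (iv) $y_i\ge 0$ for each $i<m$. It then calls a simplex decision procedure on this list. That procedure either returns $\mathrm{Unsat}$ together with a list of constraint indices, or returns $\mathrm{Sat}$ together with an assignment of rational values to the variables that satisfies every constraint in the list. In the first case $\mathrm{maximize}$ returns $\mathrm{Some}(\mathrm{Unsat}(\ldots))$; in the second case it returns $\mathrm{Some}(\mathrm{Sat}(x,y))$, where $x\in\mathbb{Q}^n$ consists of the values of $z_0,\dots,z_{n-1}$ and $y\in\mathbb{Q}^m$ consists of the values of $z_n,\dots,z_{n+m-1}$. If the length conditions on $b$ and $c$ fail, it returns $\mathrm{None}$. Claim: if $\mathrm{maximize}(A,b,c)=\mathrm{Some}(\mathrm{Sat}(x,y))$, then $x$ is an optimal solution of the linear program "maximize $c\cdot x$ subject to $Ax\le b$". That is, $Ax\le b$ holds componentwise, and $c\cdot v\le c\cdot x$ for every $v\in\mathbb{Q}^n$ with $Av\le b$ componentwise.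
   Context: $\cdot$ denotes the dot product of vectors, and $\le$ between vectors is the componentwise order. The simplex decision procedure is sound: whenever it returns $\mathrm{Sat}$, the returned assignment satisfies all the constraints it was given. The set of optimal solutions of the primal program ("max_lp $A$ $b$ $c$" in the paper) is $\{x : Ax\le b \text{ and } \forall v\,(Av\le b \Rightarrow v\cdot c\le x\cdot c)\}$. *)

theory Defs
  imports "Jordan_Normal_Form.Matrix"
begin

text \<open>Linear polynomials over rational variables z_0, z_1, ... represented as
  lists of (variable index, coefficient) pairs.\<close>
type_synonym linpoly = "(nat \<times> rat) list"

definition eval_lp :: "linpoly \<Rightarrow> (nat \<Rightarrow> rat) \<Rightarrow> rat" where
  "eval_lp p v = sum_list (map (\<lambda>(i, a). a * v i) p)"

datatype constr = LEQ linpoly rat | GEQ linpoly rat | EQ linpoly rat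

fun sat_constr :: "(nat \<Rightarrow> rat) \<Rightarrow> constr \<Rightarrow> bool" where
  "sat_constr v (LEQ p r) = (eval_lp p v \<le> r)"
| "sat_constr v (GEQ p r) = (eval_lp p v \<ge> r)"
| "sat_constr v (EQ p r) = (eval_lp p v = r)"

datatype simplex_result = Unsat "nat list" | Sat "nat \<Rightarrow> rat"

definition simplex_sound :: "(constr list \<Rightarrow> simplex_result) \<Rightarrow> bool" where
  "simplex_sound simplex =
     (\<forall>cs v. simplex cs = Sat v \<longrightarrow> (\<forall>c\<in>set cs. sat_constr v c))"

datatype lp_result = LP_Unsat "nat list" | LP_Sat "rat vec" "rat vec"

definition lp_constraints :: "rat mat \<Rightarrow> rat vec \<Rightarrow> rat vec \<Rightarrow> constr list" where
  "lp_constraints A b c = (let n = dim_col A; m = dim_row A in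
     [GEQ (map (\<lambda>j. (j, c $ j)) [0..<n] @ map (\<lambda>i. (n + i, - (b $ i))) [0..<m]) 0]
     @ map (\<lambda>i. LEQ (map (\<lambda>j. (j, A $$ (i, j))) [0..<n]) (b $ i)) [0..<m]
     @ map (\<lambda>j. EQ (map (\<lambda>i. (n + i, A $$ (i, j))) [0..<m]) (c $ j)) [0..<n]
     @ map (\<lambda>i. GEQ [(n + i, 1)] 0) [0..<m])"

definition maximize :: "(constr list \<Rightarrow> simplex_result) \<Rightarrow> rat mat \<Rightarrow> rat vec \<Rightarrow> rat vec
    \<Rightarrow> lp_result option" where
  "maximize simplex A b c =
     (if dim_vec b = dim_row A \<and> dim_vec c = dim_col A then
        (case simplex (lp_constraints A b c) of
           Unsat I \<Rightarrow> Some (LP_Unsat I)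
         | Sat v \<Rightarrow> Some (LP_Sat (vec (dim_col A) (\<lambda>j. v j))
                                 (vec (dim_row A) (\<lambda>i. v (dim_col A + i)))))
      else None)"

definition max_lp :: "rat mat \<Rightarrow> rat vec \<Rightarrow> rat vec \<Rightarrow> rat vec set" where
  "max_lp A b c = {x \<in> carrier_vec (dim_col A). A *\<^sub>v x \<le> b \<and>
     (\<forall>v \<in> carrier_vec (dim_col A). A *\<^sub>v v \<le> b \<longrightarrow> v \<bullet> c \<le> x \<bullet> c)}"

end

theory Submission
  imports Defs
begin

lemma eval_map: "eval_lp (map (\<lambda>j. (g j, f j)) [0..<n]) v = (\<Sum>j\<in>{0..<n}. f j * v (g j))"
  unfolding eval_lp_def by (simp add: o_def interv_sum_list_conv_sum_set_nat)

theorem mainTheorem2: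
  fixes A :: "rat mat" and b c x y :: "rat vec"
    and simplex :: "constr list \<Rightarrow> simplex_result"
  assumes "simplex_sound simplex"
    and "maximize simplex A b c = Some (LP_Sat x y)"
  shows "x \<in> max_lp A b c"
proof -
  define n where "n = dim_col A"
  define m where "m = dim_row A"
  have db: "dim_vec b = m" and dc: "dim_vec c = n"
    using assms(2) unfolding maximize_def m_def n_def by (auto split: if_splits)
  then obtain w where sw: "simplex (lp_constraints A b c) = Sat w"
    using assms(2) unfolding maximize_def m_def n_def
    by (auto split: simplex_result.splits)
  have xd: "x = vec n w" and yd: "y = vec m (\<lambda>i. w (n + i))"
    using assms(2) sw db dc unfolding maximize_def m_def n_def by auto
  have sat: "\<And>k. k \<in> set (lp_constraints A b c) \<Longrightarrow> sat_constr w k"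
    using assms(1) sw unfolding simplex_sound_def by blast
  have c1: "(\<Sum>j\<in>{0..<n}. c $ j * w j) + (\<Sum>i\<in>{0..<m}. - (b $ i) * w (n + i)) \<ge> 0"
    using sat[of "GEQ (map (\<lambda>j. (j, c $ j)) [0..<n] @ map (\<lambda>i. (n + i, - (b $ i))) [0..<m]) 0"]
    unfolding lp_constraints_def Let_def m_def[symmetric] n_def[symmetric]
    using eval_map[of "\<lambda>j. j" "\<lambda>j. c $ j" n w] eval_map[of "\<lambda>i. n + i" "\<lambda>i. - (b $ i)" m w]
    by (simp add: eval_lp_def)
  have c2: "(\<Sum>j\<in>{0..<n}. A $$ (i, j) * w j) \<le> b $ i" if "i < m" for i
  proof -
    have "LEQ (map (\<lambda>j. (j, A $$ (i, j))) [0..<n]) (b $ i) \<in> set (lp_constraints A b c)"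
      unfolding lp_constraints_def Let_def m_def[symmetric] n_def[symmetric] set_append set_map
      using that by (intro UnI2 UnI1 rev_image_eqI[of i]) auto
    then show ?thesis using sat eval_map[of "\<lambda>j. j" "\<lambda>j. A $$ (i, j)" n w] by fastforce
  qed
  have c3: "(\<Sum>i\<in>{0..<m}. A $$ (i, j) * w (n + i)) = c $ j" if "j < n" for j
  proof -
    have "EQ (map (\<lambda>i. (n + i, A $$ (i, j))) [0..<m]) (c $ j) \<in> set (lp_constraints A b c)"
      unfolding lp_constraints_def Let_def m_def[symmetric] n_def[symmetric] set_append set_map
      using that by (intro UnI2 UnI1 rev_image_eqI[of j]) auto
    then show ?thesis using sat eval_map[of "\<lambda>i. n + i" "\<lambda>i. A $$ (i, j)" m w] by fastforce
  qed
  have c4: "w (n + i) \<ge> 0" if "i < m" for i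
  proof -
    have "GEQ [(n + i, 1)] 0 \<in> set (lp_constraints A b c)"
      unfolding lp_constraints_def Let_def m_def[symmetric] n_def[symmetric] set_append set_map
      using that by (intro UnI2 rev_image_eqI[of i]) auto
    then show ?thesis using sat by (fastforce simp: eval_lp_def)
  qed
  have Ax: "(A *\<^sub>v v) $ i = (\<Sum>j\<in>{0..<n}. A $$ (i, j) * v $ j)" if "i < m" "v \<in> carrier_vec n" for i v
    using that unfolding m_def n_def by (simp add: scalar_prod_def row_def)
  have feas: "A *\<^sub>v x \<le> b"
    unfolding less_eq_vec_def using db c2 Ax[of _ x] xd by (auto simp: m_def)
  moreover have "v \<bullet> c \<le> x \<bullet> c" if v: "v \<in> carrier_vec n" "A *\<^sub>v v \<le> b" for v
  proof -
    have vi: "(\<Sum>j\<in>{0..<n}. A $$ (i, j) * v $ j) \<le> b $ i" if "i < m" for i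
      using v(2) Ax[OF that v(1)] that db unfolding less_eq_vec_def by auto
    have "v \<bullet> c = (\<Sum>j\<in>{0..<n}. v $ j * (\<Sum>i\<in>{0..<m}. A $$ (i, j) * w (n + i)))"
      unfolding scalar_prod_def dc using c3 by simp
    also have "\<dots> = (\<Sum>i\<in>{0..<m}. w (n + i) * (\<Sum>j\<in>{0..<n}. A $$ (i, j) * v $ j))"
      by (simp add: sum_distrib_left sum_distrib_right mult_ac sum.swap[of _ "{0..<m}"])
    also have "\<dots> \<le> (\<Sum>i\<in>{0..<m}. w (n + i) * b $ i)"
      by (intro sum_mono mult_left_mono vi c4) auto
    also have "\<dots> \<le> (\<Sum>j\<in>{0..<n}. c $ j * w j)"
      using c1 by (simp add: sum_negf mult_ac)
    also have "\<dots> = x \<bullet> c"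
      unfolding scalar_prod_def dc xd by (simp add: mult_ac)
    finally show ?thesis .
  qed
  ultimately show ?thesis unfolding max_lp_def n_def[symmetric] using xd by auto
qed

end
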